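(* Let $\nu\in(\frac12,1]$. Let $x\in\mathrm{dom}(\mathcal R)$ satisfy $\mathcal R(x)=\inf\{\mathcal R(z):z\in\mathbb X,\ Az=Ax\}$, and for every $\alpha>0$ let $x_\alpha\in R_\alpha(Ax)$ be any selection. The following are equivalent: (i) there is $c_1>0$ with $\|Ax-Ax_\alpha\|_{\mathbb Y}\le c_1\alpha^\nu$ for all $\alpha>0$; (ii) there is $c_2>0$ with $\sigma_x(\alpha)\le c_2\alpha^{2\nu-1}$ for all $\alpha>0$; (iii) there is $c_3>0$ with $\mathcal R(x)-\mathcal R(z)\le c_3\|Ax-Az\|_{\mathbb Y}^{\frac{2\nu-1}{\nu}}$ for all $z\in\mathbb X$. More precisely, (i) implies (ii) with $c_2=\frac{c_1^2}{4\nu-2}$, (ii) implies (iii) with $c_3=2c_2^{\frac1{2\nu}}$, and (iii) implies (i) with $c_1=c_3^\nu$.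
   Context: Standing setting: $\mathbb X$ is a real Banach space and $\tau$ a topology on $\mathbb X$ such that $(\mathbb X,\tau)$ is locally convex Hausdorff. $\mathcal R:\mathbb X\to(-\infty,\infty]$ is proper and convex with $\tau$-compact sublevel sets $\{\mathcal R\le\lambda\}$ for all $\lambda\in\mathbb R$. $\mathbb Y$ is a real Hilbert space and $A:\mathbb X\to\mathbb Y$ is linear and $\tau$-to-weak continuous. $T_\alpha(x,g):=\frac1{2\alpha}\|g-Ax\|_{\mathbb Y}^2+\mathcal R(x)$ and $R_\alpha(g):=\operatorname{argmin}_{x\in\mathrm{dom}(\mathcal R)}T_\alpha(x,g)$ for $\alpha>0$, $g\in\mathbb Y$. The defect of the Tikhonov functional is $\sigma_x(\alpha):=T_\alpha(x,Ax)-T_\alpha(x_\alpha,Ax)=\mathcal R(x)-\mathcal R(x_\alpha)-\frac1{2\alpha}\|Ax-Ax_\alpha\|^2_{\mathbb Y}$. *)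

theory Defs
  imports "HOL-Analysis.Analysis"
begin

definition locally_convex_hausdorff :: "('a::real_vector) topology \<Rightarrow> bool" where
  "locally_convex_hausdorff \<tau> \<longleftrightarrow>
     topspace \<tau> = UNIV \<and>
     Hausdorff_space \<tau> \<and>
     continuous_map (prod_topology \<tau> \<tau>) \<tau> (\<lambda>(x, y). x + y) \<and>
     continuous_map (prod_topology euclideanreal \<tau>) \<tau> (\<lambda>(c, x). c *\<^sub>R x) \<and>
     (\<forall>x U. openin \<tau> U \<and> x \<in> U \<longrightarrow> (\<exists>V. openin \<tau> V \<and> convex V \<and> x \<in> V \<and> V \<subseteq> U))"

definition weak_topology :: "('b::real_inner) topology" where
  "weak_topology = topology_generated_by {{y. y \<bullet> v \<in> U} | v U. open (U :: real set)}"

definition effdom :: "('a \<Rightarrow> ereal) \<Rightarrow> 'a set" where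
  "effdom R = {x. R x < \<infinity>}"

definition proper_fun :: "('a \<Rightarrow> ereal) \<Rightarrow> bool" where
  "proper_fun R \<longleftrightarrow> (\<forall>x. R x \<noteq> -\<infinity>) \<and> (\<exists>x. R x \<noteq> \<infinity>)"

definition convex_ereal_fun :: "('a::real_vector \<Rightarrow> ereal) \<Rightarrow> bool" where
  "convex_ereal_fun R \<longleftrightarrow>
     (\<forall>x y t. 0 < t \<and> t < 1 \<longrightarrow>
        R ((1 - t) *\<^sub>R x + t *\<^sub>R y) \<le> ereal (1 - t) * R x + ereal t * R y)"

definition tikhonov :: "('a \<Rightarrow> ereal) \<Rightarrow> ('a \<Rightarrow> 'b::real_normed_vector) \<Rightarrow> real \<Rightarrow> 'a \<Rightarrow> 'b \<Rightarrow> ereal" where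
  "tikhonov R A \<alpha> x g = ereal (1 / (2 * \<alpha>) * (norm (g - A x))\<^sup>2) + R x"

definition tik_argmin :: "('a \<Rightarrow> ereal) \<Rightarrow> ('a \<Rightarrow> 'b::real_normed_vector) \<Rightarrow> real \<Rightarrow> 'b \<Rightarrow> 'a set" where
  "tik_argmin R A \<alpha> g =
     {x \<in> effdom R. \<forall>z \<in> effdom R. tikhonov R A \<alpha> x g \<le> tikhonov R A \<alpha> z g}"

definition tik_defect :: "('a \<Rightarrow> ereal) \<Rightarrow> ('a \<Rightarrow> 'b::real_normed_vector) \<Rightarrow> 'a \<Rightarrow> (real \<Rightarrow> 'a) \<Rightarrow> real \<Rightarrow> ereal" where
  "tik_defect R A x xa \<alpha> = tikhonov R A \<alpha> x (A x) - tikhonov R A \<alpha> (xa \<alpha>) (A x)"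

end

theory Submission
  imports Defs
begin

lemma div_aux: "(1::real) / (- ((a - 1)/h)) = h / (1 - a)"
proof -
  have "- ((a - 1)/h) = (1 - a) / h" by (simp add: minus_divide_left)
  thus ?thesis by simp
qed

lemma lim_aux: "s > (0::real) \<Longrightarrow> ((\<lambda>h. h / (1 - (1+h) powr (-s))) \<longlongrightarrow> 1/s) (at 0)"
proof -
  assume s: "s > 0"
  have d: "((\<lambda>q. q powr (-s)) has_field_derivative (-s * 1 powr (-s - 1))) (at 1)"
    using has_real_derivative_powr[of 1 "-s"] by simp
  from DERIV_D[OF d] have "((\<lambda>h. ((1+h) powr (-s) - 1 powr (-s))/h) \<longlongrightarrow> -s * 1 powr (-s - 1)) (at 0)" .
  hence "((\<lambda>h. ((1+h) powr (-s) - 1)/h) \<longlongrightarrow> -s) (at 0)" by simp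
  hence "((\<lambda>h. 1 / (- (((1+h) powr (-s) - 1)/h))) \<longlongrightarrow> 1 / (- (-s))) (at 0)"
    using s by (intro tendsto_divide tendsto_const tendsto_minus) auto
  thus ?thesis unfolding div_aux by simp
qed

lemma limit_trade:
  fixes L C s :: real
  assumes s: "s > 0" and C: "C \<ge> 0"
    and H: "\<And>q. q > 1 \<Longrightarrow> L \<le> C * ((q - 1) / (1 - q powr (-s)))"
  shows "L \<le> C / s"
proof -
  have "((\<lambda>h. C * (h / (1 - (1+h) powr (-s)))) \<longlongrightarrow> C * (1/s)) (at 0)"
    by (intro tendsto_mult tendsto_const lim_aux s)
  hence t: "((\<lambda>h. C * (h / (1 - (1+h) powr (-s)))) \<longlongrightarrow> C * (1/s)) (at_right 0)"
    by (rule tendsto_mono[OF at_le, rotated]) simp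
  have ev: "\<forall>\<^sub>F h in at_right (0::real). L \<le> C * (h / (1 - (1+h) powr (-s)))"
    using eventually_at_right_less[of "0::real"]
  proof (rule eventually_mono)
    fix h :: real assume "0 < h"
    thus "L \<le> C * (h / (1 - (1+h) powr (-s)))" using H[of "1+h"] by simp
  qed
  have "L \<le> C * (1/s)"
    by (rule tendsto_le[OF _ t tendsto_const ev]) simp
  thus ?thesis by simp
qed

lemma weak_closed_half:
  fixes v :: "'b::real_inner" and c :: real
  shows "closedin (weak_topology::'b topology) {y. y \<bullet> v \<le> c}"
proof -
  let ?S = "{{y::'b. y \<bullet> v \<in> U} | v U. open (U :: real set)}"
  have top: "topspace (weak_topology::'b topology) = UNIV"
  proof -
    have "{y::'b. y \<bullet> 0 \<in> UNIV} \<in> ?S"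
      by (rule CollectI, rule exI[of _ 0], rule exI[of _ UNIV]) simp
    hence "UNIV \<in> ?S" by simp
    hence "UNIV \<subseteq> \<Union>?S" by (rule Union_upper)
    hence "\<Union>?S = UNIV" by (rule top.extremum_uniqueI)
    thus ?thesis unfolding weak_topology_def topology_generated_by_topspace .
  qed
  have "{y::'b. y \<bullet> v \<in> {c<..}} \<in> ?S"
    by (rule CollectI, rule exI[of _ v], rule exI[of _ "{c<..}"]) simp
  hence "openin (weak_topology::'b topology) {y. y \<bullet> v \<in> {c<..}}"
    unfolding weak_topology_def by (rule topology_generated_by_Basis)
  moreover have "topspace (weak_topology::'b topology) - {y. y \<bullet> v \<le> c} = {y. y \<bullet> v \<in> {c<..}}"
    using top by auto
  ultimately show ?thesis using top by (simp add: closedin_def)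
qed

lemma compact_step:
  fixes \<tau> :: "('a::real_vector) topology" and R :: "'a \<Rightarrow> ereal"
    and A :: "'a \<Rightarrow> 'b::real_inner" and xa :: "real \<Rightarrow> 'a"
  assumes top: "topspace \<tau> = UNIV"
    and R_sublevel: "\<And>l::real. compactin \<tau> {z. R z \<le> ereal l}"
    and A_cont: "continuous_map \<tau> weak_topology A"
    and xmin: "\<And>z. A z = A x \<Longrightarrow> R x \<le> R z"
    and Rx: "R x = ereal rx"
    and eps: "\<epsilon> > 0"
    and small: "\<And>\<eta>. \<eta> > 0 \<Longrightarrow> \<exists>\<delta>>0. \<forall>a. 0 < a \<and> a < \<delta> \<longrightarrow> norm (A x - A (xa a)) \<le> \<eta>"
  shows "\<exists>\<delta>>0. \<forall>a. 0 < a \<and> a < \<delta> \<longrightarrow> ereal (rx - \<epsilon>) < R (xa a)"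
proof (rule ccontr)
  assume contra: "\<not> ?thesis"
  define K where "K = {z. R z \<le> ereal (rx - \<epsilon>)}"
  define C where "C = (\<lambda>m::nat. {z. norm (A z - A x) \<le> 1 / (real m + 1)})"
  have Kc: "compactin \<tau> K" unfolding K_def by (rule R_sublevel)
  have Cclosed: "closedin \<tau> (C m)" for m
  proof -
    let ?r = "1 / (real m + 1)"
    have eq: "C m = (\<Inter>v\<in>UNIV. {z. A z \<in> {y. y \<bullet> v \<le> ?r * norm v + A x \<bullet> v}})"
    proof (intro set_eqI iffI)
      fix z assume "z \<in> C m"
      hence n: "norm (A z - A x) \<le> ?r" by (simp add: C_def)
      have "\<forall>v. A z \<bullet> v \<le> ?r * norm v + A x \<bullet> v"
      proof
        fix v
        have "(A z - A x) \<bullet> v \<le> norm (A z - A x) * norm v" by (rule norm_cauchy_schwarz)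
        also have "\<dots> \<le> ?r * norm v" using n by (intro mult_right_mono) auto
        finally show "A z \<bullet> v \<le> ?r * norm v + A x \<bullet> v" by (simp add: inner_diff_left)
      qed
      thus "z \<in> (\<Inter>v\<in>UNIV. {z. A z \<in> {y. y \<bullet> v \<le> ?r * norm v + A x \<bullet> v}})" by simp
    next
      fix z assume "z \<in> (\<Inter>v\<in>UNIV. {z. A z \<in> {y. y \<bullet> v \<le> ?r * norm v + A x \<bullet> v}})"
      hence "A z \<bullet> (A z - A x) \<le> ?r * norm (A z - A x) + A x \<bullet> (A z - A x)" by simp
      hence "(A z - A x) \<bullet> (A z - A x) \<le> ?r * norm (A z - A x)" by (simp add: inner_diff_left)
      moreover have "norm (A z - A x) * norm (A z - A x) = (A z - A x) \<bullet> (A z - A x)"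
        by (metis power2_eq_square power2_norm_eq_inner)
      ultimately have nn: "norm (A z - A x) * norm (A z - A x) \<le> ?r * norm (A z - A x)" by simp
      have "norm (A z - A x) \<le> ?r"
      proof (cases "norm (A z - A x) = 0")
        case False thus ?thesis using mult_right_le_imp_le[OF nn] by simp
      qed simp
      thus "z \<in> C m" by (simp add: C_def)
    qed
    have "closedin \<tau> {z \<in> topspace \<tau>. A z \<in> {y. y \<bullet> v \<le> ?r * norm v + A x \<bullet> v}}" for v
      by (rule closedin_continuous_map_preimage[OF A_cont weak_closed_half])
    hence "closedin \<tau> {z. A z \<in> {y. y \<bullet> v \<le> ?r * norm v + A x \<bullet> v}}" for v
      using top by simp
    thus ?thesis unfolding eq by (intro closedin_Inter) auto
  qed
  have Cmono: "m \<le> M \<Longrightarrow> C M \<subseteq> C m" for m M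
  proof
    fix z assume "m \<le> M" "z \<in> C M"
    moreover have "1 / (real M + 1) \<le> 1 / (real m + 1)" using \<open>m \<le> M\<close>
      by (intro divide_left_mono) auto
    ultimately show "z \<in> C m" by (auto simp: C_def)
  qed
  have Cne: "K \<inter> C M \<noteq> {}" for M
  proof -
    obtain \<delta> where d: "\<delta> > 0" "\<forall>a. 0 < a \<and> a < \<delta> \<longrightarrow> norm (A x - A (xa a)) \<le> 1 / (real M + 1)"
      using small[of "1 / (real M + 1)"] by auto
    from contra d(1) have "\<not> (\<forall>a. 0 < a \<and> a < \<delta> \<longrightarrow> ereal (rx - \<epsilon>) < R (xa a))" by blast
    then obtain a where a: "0 < a" "a < \<delta>" "\<not> ereal (rx - \<epsilon>) < R (xa a)" by blast
    have "xa a \<in> K" using a(3) by (simp add: K_def not_less)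
    moreover have "xa a \<in> C M" using d(2) a(1,2) by (simp add: C_def norm_minus_commute)
    ultimately show ?thesis by blast
  qed
  have fin: "K \<inter> \<Inter>F \<noteq> {}" if F: "finite F" "F \<subseteq> range C" for F
  proof -
    obtain I where I: "finite I" "F = C ` I"
      using finite_subset_image[OF F] by blast
    define M where "M = Max (insert 0 I)"
    have le: "m \<le> M" if "m \<in> I" for m
      unfolding M_def using I(1) that by (intro Max_ge) auto
    have "C M \<subseteq> C m" if "m \<in> I" for m using Cmono[OF le[OF that]] .
    hence "K \<inter> C M \<subseteq> K \<inter> \<Inter>F" unfolding I(2) by blast
    thus "K \<inter> \<Inter>F \<noteq> {}" using Cne[of M] by blast
  qed
  have "K \<inter> \<Inter>(range C) \<noteq> {}"
  proof -
    have all: "\<forall>\<U>. (\<forall>S\<in>\<U>. closedin \<tau> S) \<and> (\<forall>F. finite F \<and> F \<subseteq> \<U> \<longrightarrow> K \<inter> \<Inter>F \<noteq> {}) \<longrightarrow> K \<inter> \<Inter>\<U> \<noteq> {}"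
      using Kc unfolding compactin_fip by (elim conjE)
    have "(\<forall>S\<in>range C. closedin \<tau> S) \<and> (\<forall>F. finite F \<and> F \<subseteq> range C \<longrightarrow> K \<inter> \<Inter>F \<noteq> {})"
      using Cclosed fin by blast
    thus ?thesis using all by blast
  qed
  then obtain z where z: "z \<in> K" "\<And>m. z \<in> C m" by blast
  have "norm (A z - A x) = 0"
  proof (rule ccontr)
    assume "norm (A z - A x) \<noteq> 0"
    hence "norm (A z - A x) > 0" by simp
    then obtain n where "inverse (real (Suc n)) < norm (A z - A x)" using reals_Archimedean by blast
    moreover have "norm (A z - A x) \<le> 1 / (real n + 1)" using z(2)[of n] by (simp add: C_def)
    ultimately show False by (simp add: inverse_eq_divide add.commute)
  qed
  hence "A z = A x" by simp
  hence "R x \<le> R z" by (rule xmin)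
  also have "R z \<le> ereal (rx - \<epsilon>)" using z(1) by (simp add: K_def)
  finally show False using Rx eps by simp
qed

theorem theorem3:
  fixes \<tau> :: "('a::banach) topology"
    and R :: "'a \<Rightarrow> ereal"
    and A :: "'a \<Rightarrow> 'b::{real_inner, complete_space}"
    and \<nu> :: real and x :: 'a and xa :: "real \<Rightarrow> 'a"
  assumes tau: "locally_convex_hausdorff \<tau>"
    and R_proper: "proper_fun R"
    and R_convex: "convex_ereal_fun R"
    and R_sublevel: "\<And>l::real. compactin \<tau> {z. R z \<le> ereal l}"
    and A_lin: "linear A"
    and A_cont: "continuous_map \<tau> weak_topology A"
    and nu: "1/2 < \<nu>" "\<nu> \<le> 1"
    and x_dom: "x \<in> effdom R"
    and x_min: "R x = (INF z \<in> {z. A z = A x}. R z)"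
    and xa: "\<And>\<alpha>. \<alpha> > 0 \<Longrightarrow> xa \<alpha> \<in> tik_argmin R A \<alpha> (A x)"
  defines "P1 \<equiv> \<lambda>c1. \<forall>\<alpha>>0. norm (A x - A (xa \<alpha>)) \<le> c1 * \<alpha> powr \<nu>"
    and "P2 \<equiv> \<lambda>c2. \<forall>\<alpha>>0. tik_defect R A x xa \<alpha> \<le> ereal (c2 * \<alpha> powr (2 * \<nu> - 1))"
    and "P3 \<equiv> \<lambda>c3. \<forall>z. R x - R z \<le> ereal (c3 * norm (A x - A z) powr ((2 * \<nu> - 1) / \<nu>))"
  shows "((\<exists>c1>0. P1 c1) \<longleftrightarrow> (\<exists>c2>0. P2 c2)) \<and>
         ((\<exists>c2>0. P2 c2) \<longleftrightarrow> (\<exists>c3>0. P3 c3)) \<and>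
         (\<forall>c1>0. P1 c1 \<longrightarrow> P2 (c1\<^sup>2 / (4 * \<nu> - 2))) \<and>
         (\<forall>c2>0. P2 c2 \<longrightarrow> P3 (2 * c2 powr (1 / (2 * \<nu>)))) \<and>
         (\<forall>c3>0. P3 c3 \<longrightarrow> P1 (c3 powr \<nu>))"
proof -
  define s where "s = 2 * \<nu> - 1"
  have s_pos: "s > 0" using nu by (simp add: s_def)
  have top: "topspace \<tau> = UNIV" using tau by (simp add: locally_convex_hausdorff_def)
  define Rr where "Rr = (\<lambda>z. real_of_ereal (R z))"
  have fin: "R z = ereal (Rr z)" if "z \<in> effdom R" for z
  proof -
    have "R z \<noteq> \<infinity>" "R z \<noteq> -\<infinity>" using that R_proper by (auto simp: effdom_def proper_fun_def)
    thus ?thesis by (cases "R z") (auto simp: Rr_def)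
  qed
  have xa_dom: "xa \<alpha> \<in> effdom R" if "\<alpha> > 0" for \<alpha>
    using xa[OF that] by (simp add: tik_argmin_def)
  define rx where "rx = Rr x"
  have Rx: "R x = ereal rx" using fin[OF x_dom] by (simp add: rx_def)
  define D where "D = (\<lambda>\<alpha>. norm (A x - A (xa \<alpha>)))"
  define \<Phi> where "\<Phi> = (\<lambda>\<alpha>. 1 / (2 * \<alpha>) * (D \<alpha>)\<^sup>2 + Rr (xa \<alpha>))"
  have minr: "\<Phi> \<alpha> \<le> 1 / (2 * \<alpha>) * (norm (A x - A z))\<^sup>2 + Rr z" if "\<alpha> > 0" "z \<in> effdom R" for \<alpha> z
  proof -
    have "tikhonov R A \<alpha> (xa \<alpha>) (A x) \<le> tikhonov R A \<alpha> z (A x)"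
      using xa[OF that(1)] that(2) by (simp add: tik_argmin_def)
    thus ?thesis unfolding tikhonov_def using fin[OF that(2)] fin[OF xa_dom[OF that(1)]]
      by (simp add: \<Phi>_def D_def)
  qed
  have defect: "tik_defect R A x xa \<alpha> = ereal (rx - \<Phi> \<alpha>)" if "\<alpha> > 0" for \<alpha>
    unfolding tik_defect_def tikhonov_def using Rx fin[OF xa_dom[OF that]]
    by (simp add: \<Phi>_def D_def)
  have xmin: "R x \<le> R z" if "A z = A x" for z
    unfolding x_min using that by (intro INF_lower) simp
  have P2_iff: "P2 c \<longleftrightarrow> (\<forall>\<alpha>>0. rx - \<Phi> \<alpha> \<le> c * \<alpha> powr s)" for c
    unfolding P2_def s_def using defect by simp
  have I12: "P2 (c1\<^sup>2 / (4 * \<nu> - 2))" if c1: "c1 > 0" "P1 c1" for c1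
  proof -
    have D_le: "D \<alpha> \<le> c1 * \<alpha> powr \<nu>" if "\<alpha> > 0" for \<alpha>
      using c1(2) that unfolding P1_def D_def by blast
    have small: "\<exists>\<delta>>0. \<forall>a. 0 < a \<and> a < \<delta> \<longrightarrow> norm (A x - A (xa a)) \<le> \<eta>" if \<eta>: "\<eta> > 0" for \<eta>
    proof -
      define \<delta> where "\<delta> = (\<eta> / c1) powr (1 / \<nu>)"
      have \<delta>: "\<delta> > 0" using \<eta> c1 by (simp add: \<delta>_def)
      have "\<forall>a. 0 < a \<and> a < \<delta> \<longrightarrow> D a \<le> \<eta>"
      proof (intro allI impI)
        fix a assume a: "0 < a \<and> a < \<delta>"
        have "a powr \<nu> \<le> \<delta> powr \<nu>" using a nu by (intro powr_mono2) auto
        also have "\<delta> powr \<nu> = \<eta> / c1" using \<eta> c1 nu unfolding \<delta>_def by (simp add: powr_powr)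
        finally have "c1 * a powr \<nu> \<le> \<eta>" using c1 by (simp add: field_simps)
        thus "D a \<le> \<eta>" using D_le[of a] a by linarith
      qed
      thus ?thesis using \<delta> unfolding D_def by blast
    qed
    have eps: "\<exists>\<delta>>0. \<forall>a. 0 < a \<and> a < \<delta> \<longrightarrow> rx - \<epsilon> < Rr (xa a)" if "\<epsilon> > 0" for \<epsilon>
    proof -
      from compact_step[OF top R_sublevel A_cont xmin Rx that small]
      obtain \<delta> where \<delta>: "\<delta> > 0" "\<forall>a. 0 < a \<and> a < \<delta> \<longrightarrow> ereal (rx - \<epsilon>) < R (xa a)" by blast
      have "\<forall>a. 0 < a \<and> a < \<delta> \<longrightarrow> rx - \<epsilon> < Rr (xa a)"
      proof (intro allI impI)
        fix a assume a: "0 < a \<and> a < \<delta>"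
        hence "ereal (rx - \<epsilon>) < R (xa a)" using \<delta>(2) by blast
        thus "rx - \<epsilon> < Rr (xa a)" using fin[OF xa_dom[of a]] a by simp
      qed
      thus ?thesis using \<delta>(1) by blast
    qed
    have main: "rx - \<Phi> \<alpha> \<le> (c1\<^sup>2 / 2 * \<alpha> powr s) / s" if \<alpha>: "\<alpha> > 0" for \<alpha>
    proof (rule limit_trade[OF s_pos])
      show "0 \<le> c1\<^sup>2 / 2 * \<alpha> powr s" by simp
    next
      fix q :: real assume q: "q > 1"
      define r where "r = q powr (- s)"
      have r: "0 < r" "r < 1" using q s_pos by (auto simp: r_def intro: powr_less_one)
      define a where "a = (\<lambda>k::nat. \<alpha> / q ^ k)"
      have apos: "a k > 0" for k using \<alpha> q by (simp add: a_def)
      have step: "\<Phi> (a (Suc k)) - \<Phi> (a k) \<le> c1\<^sup>2 / 2 * \<alpha> powr s * (q - 1) * r ^ k" for k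
      proof -
        have "\<Phi> (a (Suc k)) \<le> 1 / (2 * a (Suc k)) * (D (a k))\<^sup>2 + Rr (xa (a k))"
          using minr[OF apos xa_dom[OF apos]] unfolding D_def .
        hence "\<Phi> (a (Suc k)) - \<Phi> (a k) \<le> (1 / (2 * a (Suc k)) - 1 / (2 * a k)) * (D (a k))\<^sup>2"
          unfolding \<Phi>_def by (simp add: algebra_simps)
        also have "1 / (2 * a (Suc k)) - 1 / (2 * a k) = (q - 1) / (2 * a k)"
          unfolding a_def using \<alpha> q by (simp add: field_simps)
        also have "(q - 1) / (2 * a k) * (D (a k))\<^sup>2 \<le> (q - 1) / (2 * a k) * (c1 * a k powr \<nu>)\<^sup>2"
          using D_le[OF apos] q apos[of k] by (intro mult_left_mono power_mono) (auto simp: D_def)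
        also have "(c1 * a k powr \<nu>)\<^sup>2 = c1\<^sup>2 * (a k powr s * a k)"
        proof -
          have "(a k powr \<nu>)\<^sup>2 = (a k powr \<nu>) powr 2" using apos[of k] by (simp add: powr_numeral)
          also have "\<dots> = a k powr (\<nu> * 2)" by (rule powr_powr)
          also have "\<dots> = a k powr (s + 1)" by (simp add: s_def mult.commute)
          also have "\<dots> = a k powr s * a k" using apos[of k] by (simp add: powr_add)
          finally show ?thesis by (simp add: power_mult_distrib)
        qed
        also have "(q - 1) / (2 * a k) * (c1\<^sup>2 * (a k powr s * a k)) = c1\<^sup>2 / 2 * (q - 1) * a k powr s"
          using apos[of k] by (simp add: field_simps)
        also have "a k powr s = \<alpha> powr s * r ^ k"
        proof -
          have "a k powr s = \<alpha> powr s / (q ^ k) powr s"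
            unfolding a_def by (rule powr_divide)
          also have "(q ^ k) powr s = (q powr s) ^ k"
            using q by (simp add: powr_realpow[symmetric] powr_powr mult.commute)
          also have "r ^ k = 1 / (q powr s) ^ k"
            unfolding r_def using q by (simp add: powr_minus power_inverse divide_inverse)
          hence "\<alpha> powr s / (q powr s) ^ k = \<alpha> powr s * r ^ k" by simp
          finally show ?thesis .
        qed
        finally show ?thesis by (simp add: mult_ac)
      qed
      have sum_le: "\<Phi> (a N) - \<Phi> \<alpha> \<le> c1\<^sup>2 / 2 * \<alpha> powr s * ((q - 1) / (1 - r))" for N
      proof -
        have a0: "a 0 = \<alpha>" by (simp add: a_def)
        have "\<Phi> (a N) - \<Phi> (a 0) = (\<Sum>k<N. \<Phi> (a (Suc k)) - \<Phi> (a k))"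
          by (rule sum_lessThan_telescope[symmetric])
        also have "\<dots> \<le> (\<Sum>k<N. c1\<^sup>2 / 2 * \<alpha> powr s * (q - 1) * r ^ k)"
          by (rule sum_mono) (rule step)
        also have "\<dots> = c1\<^sup>2 / 2 * \<alpha> powr s * (q - 1) * (\<Sum>k<N. r ^ k)"
          by (simp add: sum_distrib_left)
        also have "(\<Sum>k<N. r ^ k) = (1 - r ^ N) / (1 - r)" using r by (simp add: sum_gp_strict)
        also have "c1\<^sup>2 / 2 * \<alpha> powr s * (q - 1) * ((1 - r ^ N) / (1 - r))
                   \<le> c1\<^sup>2 / 2 * \<alpha> powr s * (q - 1) * (1 / (1 - r))"
          using r q by (intro mult_left_mono divide_right_mono) auto
        finally show ?thesis using a0 by simp
      qed
      show "rx - \<Phi> \<alpha> \<le> c1\<^sup>2 / 2 * \<alpha> powr s * ((q - 1) / (1 - q powr (- s)))"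
      proof (rule field_le_epsilon)
        fix \<epsilon> :: real assume \<epsilon>: "\<epsilon> > 0"
        obtain \<delta> where \<delta>: "\<delta> > 0" "\<forall>a. 0 < a \<and> a < \<delta> \<longrightarrow> rx - \<epsilon> < Rr (xa a)"
          using eps[OF \<epsilon>] by blast
        obtain N where N: "\<alpha> / \<delta> < q ^ N" using real_arch_pow[OF q] by blast
        have "\<alpha> < \<delta> * q ^ N" using N \<delta>(1) by (simp add: divide_less_eq mult.commute)
        hence "a N < \<delta>" using q by (simp add: a_def divide_less_eq)
        hence "rx - \<epsilon> < Rr (xa (a N))" using \<delta>(2) apos[of N] by blast
        also have "Rr (xa (a N)) \<le> \<Phi> (a N)" unfolding \<Phi>_def using apos[of N] by simp
        finally have "rx - \<epsilon> < \<Phi> (a N)" .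
        thus "rx - \<Phi> \<alpha> \<le> c1\<^sup>2 / 2 * \<alpha> powr s * ((q - 1) / (1 - q powr (- s))) + \<epsilon>"
          using sum_le[of N] unfolding r_def by linarith
      qed
    qed
    have e: "4 * \<nu> - 2 = 2 * s" by (simp add: s_def)
    have "(c1\<^sup>2 / 2 * \<alpha> powr s) / s = c1\<^sup>2 / (4 * \<nu> - 2) * \<alpha> powr s" for \<alpha>
      unfolding e by simp
    hence "\<forall>\<alpha>>0. rx - \<Phi> \<alpha> \<le> c1\<^sup>2 / (4 * \<nu> - 2) * \<alpha> powr s"
      using main by metis
    thus ?thesis unfolding P2_iff .
  qed
  have I23: "P3 (2 * c2 powr (1 / (2 * \<nu>)))" if c2: "c2 > 0" "P2 c2" for c2
    unfolding P3_def
  proof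
    fix z
    define p where "p = (2 * \<nu> - 1) / \<nu>"
    define c3 where "c3 = 2 * c2 powr (1 / (2 * \<nu>))"
    define d where "d = norm (A x - A z)"
    have goal: "R x - R z \<le> ereal (c3 * d powr p)"
    proof (cases "z \<in> effdom R")
      case False
      hence "R z = \<infinity>" by (simp add: effdom_def)
      thus ?thesis using Rx by simp
    next
      case zdom: True
      show ?thesis
      proof (cases "d = 0")
        case True
        hence "A z = A x" by (simp add: d_def)
        hence "R x \<le> R z" by (rule xmin)
        thus ?thesis using True Rx fin[OF zdom] by simp
      next
        case False
        hence dpos: "d > 0" by (simp add: d_def)
        define \<alpha> where "\<alpha> = (d\<^sup>2 / c2) powr (1 / (2 * \<nu>))"
        have \<alpha>: "\<alpha> > 0" using dpos c2 by (simp add: \<alpha>_def)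
        have h1: "rx - \<Phi> \<alpha> \<le> c2 * \<alpha> powr s" using c2(2) \<alpha> unfolding P2_iff by blast
        have h2: "\<Phi> \<alpha> \<le> 1 / (2 * \<alpha>) * d\<^sup>2 + Rr z" using minr[OF \<alpha> zdom] by (simp add: d_def)
        have h3: "\<alpha> powr (2 * \<nu>) = d\<^sup>2 / c2"
          unfolding \<alpha>_def using nu dpos c2 by (simp add: powr_powr)
        have "\<alpha> powr (2 * \<nu>) = \<alpha> powr (s + 1)" by (simp add: s_def)
        also have "\<dots> = \<alpha> powr s * \<alpha>" using \<alpha> by (simp add: powr_add)
        finally have "\<alpha> powr (2 * \<nu>) = \<alpha> powr s * \<alpha>" .
        hence h4: "d\<^sup>2 = c2 * (\<alpha> powr s) * \<alpha>" using h3 c2 by (simp add: field_simps)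
        have h5: "1 / (2 * \<alpha>) * d\<^sup>2 = c2 * \<alpha> powr s / 2" using h4 \<alpha> by simp
        have h6: "c2 * \<alpha> powr s = c2 powr (1 / (2 * \<nu>)) * d powr p"
        proof -
          have "\<alpha> powr s = (d\<^sup>2 / c2) powr (s / (2 * \<nu>))"
            unfolding \<alpha>_def by (simp add: powr_powr)
          also have "\<dots> = (d\<^sup>2) powr (s / (2 * \<nu>)) / c2 powr (s / (2 * \<nu>))"
            by (rule powr_divide)
          also have "(d\<^sup>2) powr (s / (2 * \<nu>)) = d powr p"
          proof -
            have "(d\<^sup>2) powr (s / (2 * \<nu>)) = (d powr 2) powr (s / (2 * \<nu>))"
              using dpos by (simp add: powr_numeral)
            also have "\<dots> = d powr (2 * (s / (2 * \<nu>)))" by (simp add: powr_powr)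
            also have "2 * (s / (2 * \<nu>)) = p" using nu by (simp add: p_def s_def field_simps)
            finally show ?thesis .
          qed
          finally have "c2 * \<alpha> powr s = c2 / c2 powr (s / (2 * \<nu>)) * d powr p" by simp
          also have "c2 / c2 powr (s / (2 * \<nu>)) = c2 powr (1 / (2 * \<nu>))"
          proof -
            have "c2 / c2 powr (s / (2 * \<nu>)) = c2 powr (1 - s / (2 * \<nu>))"
              using c2 by (simp add: powr_diff)
            also have "1 - s / (2 * \<nu>) = 1 / (2 * \<nu>)" using nu by (simp add: s_def field_simps)
            finally show ?thesis .
          qed
          finally show ?thesis .
        qed
        have "rx - Rr z \<le> c2 * \<alpha> powr s + c2 * \<alpha> powr s / 2" using h1 h2 h5 by linarith
        also have "\<dots> \<le> 2 * (c2 * \<alpha> powr s)" using c2 by simp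
        also have "\<dots> = c3 * d powr p" unfolding h6 c3_def by simp
        finally show ?thesis using Rx fin[OF zdom] by simp
      qed
    qed
    thus "R x - R z \<le> ereal (2 * c2 powr (1 / (2 * \<nu>)) * norm (A x - A z) powr ((2 * \<nu> - 1) / \<nu>))"
      by (simp add: c3_def d_def p_def)
  qed
  have I31: "P1 (c3 powr \<nu>)" if c3: "c3 > 0" "P3 c3" for c3
    unfolding P1_def
  proof (intro allI impI)
    fix \<alpha> :: real assume \<alpha>: "\<alpha> > 0"
    define y where "y = xa \<alpha>"
    define d where "d = D \<alpha>"
    define E where "E = rx - Rr y"
    define p where "p = (2 * \<nu> - 1) / \<nu>"
    have ydom: "y \<in> effdom R" using xa_dom[OF \<alpha>] by (simp add: y_def)
    have "R x - R y \<le> ereal (c3 * norm (A x - A y) powr p)"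
      using c3(2) unfolding P3_def p_def by blast
    hence E_le: "E \<le> c3 * d powr p"
      using Rx fin[OF ydom] by (simp add: E_def d_def D_def y_def)
    have conv: "(2 - t) * (d\<^sup>2 / (2 * \<alpha>)) \<le> E" if t: "0 < t" "t < 1" for t
    proof -
      define zt where "zt = (1 - t) *\<^sub>R y + t *\<^sub>R x"
      have "R zt \<le> ereal (1 - t) * R y + ereal t * R x"
        using R_convex t unfolding convex_ereal_fun_def zt_def by blast
      hence Rzt: "R zt \<le> ereal ((1 - t) * Rr y + t * rx)"
        using Rx fin[OF ydom] by simp
      hence ztdom: "zt \<in> effdom R" unfolding effdom_def by (auto intro: le_less_trans)
      have Rrzt: "Rr zt \<le> (1 - t) * Rr y + t * rx" using fin[OF ztdom] Rzt by simp
      have "A zt = (1 - t) *\<^sub>R A y + t *\<^sub>R A x"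
        unfolding zt_def using A_lin by (simp add: linear_add linear_scale)
      hence "A x - A zt = (1 - t) *\<^sub>R (A x - A y)" by (simp add: algebra_simps)
      hence "norm (A x - A zt) = (1 - t) * d" using t by (simp add: d_def D_def y_def)
      hence "\<Phi> \<alpha> \<le> 1 / (2 * \<alpha>) * ((1 - t) * d)\<^sup>2 + Rr zt" using minr[OF \<alpha> ztdom] by simp
      also have "\<dots> \<le> 1 / (2 * \<alpha>) * ((1 - t) * d)\<^sup>2 + ((1 - t) * Rr y + t * rx)" using Rrzt by simp
      finally have "1 / (2 * \<alpha>) * d\<^sup>2 + Rr y \<le> 1 / (2 * \<alpha>) * ((1 - t) * d)\<^sup>2 + ((1 - t) * Rr y + t * rx)"
        by (simp add: \<Phi>_def d_def y_def)
      moreover have "1 / (2 * \<alpha>) * ((1 - t) * d)\<^sup>2 = (1 - t)\<^sup>2 * (d\<^sup>2 / (2 * \<alpha>))"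
        by (simp add: power_mult_distrib)
      moreover have "1 / (2 * \<alpha>) * d\<^sup>2 = d\<^sup>2 / (2 * \<alpha>)" by simp
      moreover have "t * ((2 - t) * X) = X - (1 - t)\<^sup>2 * X" for X :: real
        by (simp add: algebra_simps power2_eq_square)
      hence "t * ((2 - t) * (d\<^sup>2 / (2 * \<alpha>))) = d\<^sup>2 / (2 * \<alpha>) - (1 - t)\<^sup>2 * (d\<^sup>2 / (2 * \<alpha>))" .
      moreover have "t * (rx - Rr y) = t * rx - t * Rr y" "(1 - t) * Rr y = Rr y - t * Rr y"
        by (simp_all add: algebra_simps)
      ultimately have "t * ((2 - t) * (d\<^sup>2 / (2 * \<alpha>))) \<le> t * E"
        unfolding E_def by linarith
      from mult_left_le_imp_le[OF this t(1)] show ?thesis .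
    qed
    have dE: "d\<^sup>2 / \<alpha> \<le> E"
    proof -
      have lim: "((\<lambda>t. (2 - t) * (d\<^sup>2 / (2 * \<alpha>))) \<longlongrightarrow> (2 - 0) * (d\<^sup>2 / (2 * \<alpha>))) (at_right 0)"
        by (intro tendsto_intros)
      have ev: "\<forall>\<^sub>F t in at_right (0::real). (2 - t) * (d\<^sup>2 / (2 * \<alpha>)) \<le> E"
        unfolding eventually_at_right_field using conv by (intro exI[of _ 1]) auto
      have "(2 - 0) * (d\<^sup>2 / (2 * \<alpha>)) \<le> E"
        by (rule tendsto_le[OF _ tendsto_const lim ev]) simp
      thus ?thesis by simp
    qed
    show "norm (A x - A (xa \<alpha>)) \<le> c3 powr \<nu> * \<alpha> powr \<nu>"
    proof (cases "d = 0")
      case True thus ?thesis by (simp add: d_def D_def)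
    next
      case False
      hence dpos: "d > 0" by (simp add: d_def D_def)
      have "d\<^sup>2 \<le> E * \<alpha>" using dE \<alpha> by (simp add: divide_le_eq)
      also have "E * \<alpha> \<le> (c3 * d powr p) * \<alpha>" using E_le \<alpha> by (intro mult_right_mono) auto
      finally have "d powr 2 \<le> \<alpha> * (c3 * d powr p)"
        using dpos by (simp add: powr_numeral mult.commute)
      hence "d powr 2 / d powr p \<le> \<alpha> * c3" using dpos by (simp add: divide_le_eq mult.commute mult.left_commute)
      hence "d powr (1 / \<nu>) \<le> \<alpha> * c3"
      proof -
        have "2 - p = 1 / \<nu>" using nu by (simp add: p_def field_simps)
        thus "d powr 2 / d powr p \<le> \<alpha> * c3 \<Longrightarrow> ?thesis" by (simp add: powr_diff[symmetric])
      qed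
      hence "(d powr (1 / \<nu>)) powr \<nu> \<le> (\<alpha> * c3) powr \<nu>" using nu dpos by (intro powr_mono2) auto
      hence "d \<le> (\<alpha> * c3) powr \<nu>" using nu dpos by (simp add: powr_powr)
      thus ?thesis by (simp add: d_def D_def powr_mult mult.commute)
    qed
  qed
  have pos1: "c1\<^sup>2 / (4 * \<nu> - 2) > 0" if "c1 > 0" for c1 using that nu by simp
  have pos2: "2 * c2 powr (1 / (2 * \<nu>)) > 0" if "c2 > 0" for c2 using that by simp
  have pos3: "c3 powr \<nu> > 0" if "c3 > 0" for c3 using that by simp
  have e1: "(\<exists>c1>0. P1 c1) \<longleftrightarrow> (\<exists>c2>0. P2 c2)"
  proof
    assume "\<exists>c1>0. P1 c1"
    then obtain c1 where "c1 > 0" "P1 c1" by blast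
    thus "\<exists>c2>0. P2 c2" using I12 pos1 by blast
  next
    assume "\<exists>c2>0. P2 c2"
    then obtain c2 where "c2 > 0" "P2 c2" by blast
    hence "P3 (2 * c2 powr (1 / (2 * \<nu>)))" by (rule I23)
    hence "P1 ((2 * c2 powr (1 / (2 * \<nu>))) powr \<nu>)" using I31 pos2 \<open>c2 > 0\<close> by blast
    thus "\<exists>c1>0. P1 c1" using pos3 pos2 \<open>c2 > 0\<close> by blast
  qed
  have e2: "(\<exists>c2>0. P2 c2) \<longleftrightarrow> (\<exists>c3>0. P3 c3)"
  proof
    assume "\<exists>c2>0. P2 c2"
    then obtain c2 where "c2 > 0" "P2 c2" by blast
    thus "\<exists>c3>0. P3 c3" using I23 pos2 by blast
  next
    assume "\<exists>c3>0. P3 c3"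
    then obtain c3 where "c3 > 0" "P3 c3" by blast
    hence "P1 (c3 powr \<nu>)" by (rule I31)
    hence "P2 ((c3 powr \<nu>)\<^sup>2 / (4 * \<nu> - 2))" using I12 pos3 \<open>c3 > 0\<close> by blast
    thus "\<exists>c2>0. P2 c2" using pos1 pos3 \<open>c3 > 0\<close> by blast
  qed
  show ?thesis
  proof (intro conjI e1 e2 allI impI)
    fix c1 :: real assume "c1 > 0" "P1 c1" thus "P2 (c1\<^sup>2 / (4 * \<nu> - 2))" using I12 by blast
  next
    fix c2 :: real assume "c2 > 0" "P2 c2" thus "P3 (2 * c2 powr (1 / (2 * \<nu>)))" using I23 by blast
  next
    fix c3 :: real assume "c3 > 0" "P3 c3" thus "P1 (c3 powr \<nu>)" using I31 by blast
  qed
qed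

end
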